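(* Let $n$ and $h$ be positive integers and let $m$ and $s$ be nonnegative integers with $h\le n-m$ and $s\le m$. Then, as an identity of rational functions in $q$ and $x$, $$\sum_{j=s}^{m}\sum_{k=s}^{n}\frac{(q^{-n};q)_j(q^{-n};q)_k(x;q)_j(x;q)_k(q^{j-m-h+1};q)_{h-1}(q^{k-m-h+1};q)_{h-1}(1-q^{k-j})\,q^{2j+k}}{(q;q)_{j-s}(q;q)_{j+s}(q;q)_{k-s}(q;q)_{k+s}}$$ $$=\frac{(q;q)_n^2\,(q;q)_{h-1}\,(x;q)_s\,(x;q)_{m+h}\,(q^{s+1}/x;q)_{n-s-h}\,x^{n-s-h}\,q^{\frac{m^2+3m-s^2+s}{2}-mn-mh-h^2+h}}{(-1)^{m-s-1}(q;q)_{m-s}(q;q)_{m+s}(q;q)_{n-s}(q;q)_{n+s}(q;q)_{n-m-h}}.$$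
   Context: For an indeterminate $q$ and an integer $n\ge 0$: $(a;q)_0=1$ and $(a;q)_n=(1-a)(1-aq)\cdots(1-aq^{n-1})$. *)

theory Defs
  imports Complex_Main
begin

definition qpoch :: "'a::field \<Rightarrow> 'a \<Rightarrow> nat \<Rightarrow> 'a" where
  "qpoch a q n = (\<Prod>i<n. (1 - a * q ^ i))"

end

theory Submission
  imports Defs "HOL-Computational_Algebra.Polynomial"
begin

lemma qpoch_0[simp]: "qpoch a q 0 = 1"
  by (simp add: qpoch_def)

lemma qpoch_Suc: "qpoch a q (Suc n) = qpoch a q n * (1 - a*q^n)"
  by (simp add: qpoch_def)

lemma qpoch_add: "qpoch a q (n+l) = qpoch a q n * qpoch (a*q^n) q l"
  by (induction l) (simp_all add: qpoch_Suc power_add mult_ac)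

lemma qpoch_Suc': "qpoch a q (Suc n) = (1-a) * qpoch (a*q) q n"
  using qpoch_add[of a q 1 n] by (simp add: qpoch_def)

lemma qpoch_zero: "i < n \<Longrightarrow> a * q^i = 1 \<Longrightarrow> qpoch a q n = 0"
  unfolding qpoch_def by (rule prod_zero) auto

lemma qpoch_nz: "(\<And>i. i<n \<Longrightarrow> a*q^i \<noteq> 1) \<Longrightarrow> qpoch a q n \<noteq> 0"
  unfolding qpoch_def by (subst prod_zero_iff) auto

locale qctx =
  fixes q :: complex
  assumes q0: "q \<noteq> 0" and qroot: "\<And>i::nat. i > 0 \<Longrightarrow> q ^ i \<noteq> 1"
begin

lemma powi_pos1: "a > 0 \<Longrightarrow> q powi a \<noteq> 1"
  using qroot[of "nat a"] by (simp add: power_int_def)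

lemma powi_eq1: "q powi a = 1 \<longleftrightarrow> a = 0"
proof
  assume h: "q powi a = 1"
  have h2: "q powi (-a) = 1" using h by (simp add: power_int_minus)
  show "a = 0"
  proof (rule ccontr)
    assume "a \<noteq> 0"
    then consider "a > 0" | "-a > 0" by linarith
    then show False using powi_pos1 h h2 by cases blast+
  qed
qed simp

lemma powi_inj: "q powi a = q powi b \<longleftrightarrow> a = b"
proof
  assume "q powi a = q powi b"
  then have "q powi (a - b) = 1" using q0 by (simp add: power_int_diff)
  then show "a = b" using powi_eq1 by simp
qed simp

lemma qq_nz: "qpoch q q n \<noteq> 0"
proof (rule qpoch_nz)
  fix i assume "i < n"
  show "q * q^i \<noteq> 1" using qroot[of "Suc i"] by simp
qed

definition cc :: "nat \<Rightarrow> nat \<Rightarrow> complex" where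
  "cc N t = qpoch (q powi (- int N)) q t / qpoch q q t"

definition G :: "nat \<Rightarrow> complex \<Rightarrow> complex" where
  "G N z = (\<Sum>t\<le>N. cc N t * z^t)"

lemma cc_0[simp]: "cc N 0 = 1" by (simp add: cc_def)

lemma cc_top: "cc N (Suc N) = 0"
proof -
  have "qpoch (q powi (- int N)) q (Suc N) = 0"
    by (rule qpoch_zero[of N]) (use q0 in \<open>simp_all add: power_int_minus\<close>)
  then show ?thesis by (simp add: cc_def)
qed

lemma cc_rec: "cc (Suc N) (Suc t) = (cc N (Suc t) - cc N t) / q^(Suc t)"
proof -
  define A where "A = qpoch (q powi (- int N)) q t"
  define B where "B = qpoch q q t"
  have B0: "B \<noteq> 0" using qq_nz by (simp add: B_def)
  have Sq: "1 - q * q^t \<noteq> 0" using qroot[of "Suc t"] by simp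
  have qq: "q powi (- int (Suc N)) * q = q powi (- int N)"
    using power_int_add_1[of q "- int (Suc N)"] q0 by simp
  have e1: "qpoch (q powi (- int (Suc N))) q (Suc t) = (1 - q powi (- int (Suc N))) * A"
    unfolding A_def qpoch_Suc' qq ..
  have e2: "qpoch (q powi (- int N)) q (Suc t) = A * (1 - q powi (- int N) * q^t)"
    unfolding A_def qpoch_Suc ..
  have e3: "qpoch q q (Suc t) = B * (1 - q*q^t)" unfolding B_def qpoch_Suc by simp
  have p1: "q powi (- int (Suc N)) = 1/(q^N * q)" by (metis power_int_minus_divide power_int_of_nat power_Suc2)
  have p2: "q powi (- int N) = 1/(q^N)" by (simp add: power_int_minus_divide)
  show ?thesis
    unfolding cc_def e1 e2 e3 A_def[symmetric] B_def[symmetric]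
    using B0 Sq q0 unfolding p1 p2
    by (simp add: field_simps)
qed

lemma G_rec: "G (Suc N) z = (1 - z/q) * G N (z/q)"
proof -
  have "G (Suc N) z = (\<Sum>t\<le>Suc N. cc (Suc N) t * z^t)" by (simp add: G_def)
  also have "\<dots> = 1 + (\<Sum>t\<le>N. cc (Suc N) (Suc t) * z^(Suc t))"
    by (subst sum.atMost_Suc_shift) simp
  also have "(\<Sum>t\<le>N. cc (Suc N) (Suc t) * z^(Suc t)) = (\<Sum>t\<le>N. cc N (Suc t) * (z/q)^(Suc t) - cc N t * (z/q)^(Suc t))"
    by (rule sum.cong) (use q0 in \<open>simp_all add: cc_rec field_simps power_divide\<close>)
  also have "\<dots> = (\<Sum>t\<le>N. cc N (Suc t) * (z/q)^(Suc t)) - (\<Sum>t\<le>N. cc N t * (z/q)^(Suc t))"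
    by (rule sum_subtractf)
  also have "(\<Sum>t\<le>N. cc N (Suc t) * (z/q)^(Suc t)) = (\<Sum>t\<le>Suc N. cc N t * (z/q)^t) - 1"
    unfolding sum.atMost_Suc_shift[where n=N] by simp
  also have "(\<Sum>t\<le>Suc N. cc N t * (z/q)^t) = G N (z/q)"
    by (simp add: G_def cc_top)
  also have "(\<Sum>t\<le>N. cc N t * (z/q)^(Suc t)) = (z/q) * G N (z/q)"
    by (simp add: G_def sum_distrib_left mult_ac)
  finally show ?thesis by (simp add: algebra_simps)
qed

lemma G_vanish: "1 \<le> a \<Longrightarrow> a \<le> N \<Longrightarrow> G N (q^a) = 0"
proof (induction N arbitrary: a)
  case 0 then show ?case by simp
next
  case (Suc N)
  show ?case
  proof (cases "a = 1")
    case True then show ?thesis using q0 by (simp add: G_rec)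
  next
    case False
    from Suc.prems obtain b where b: "a = Suc b" by (cases a) auto
    then have "q^a/q = q^(a-1)" using q0 by simp
    then show ?thesis using Suc False by (simp add: G_rec)
  qed
qed

lemma V_list: "1 \<le> a \<Longrightarrow> a + length bs \<le> N \<Longrightarrow>
   (\<Sum>t\<le>N. cc N t * (q^t)^a * prod_list (map (\<lambda>b. 1 - b*q^t) bs)) = 0"
proof (induction bs arbitrary: a)
  case Nil
  then have "G N (q^a) = 0" by (intro G_vanish) auto
  then show ?case by (simp add: G_def power_mult[symmetric] mult.commute)
next
  case (Cons b bs)
  have h1: "(\<Sum>t\<le>N. cc N t * (q^t)^a * prod_list (map (\<lambda>b. 1 - b*q^t) bs)) = 0"
    using Cons by simp
  have h2: "(\<Sum>t\<le>N. cc N t * (q^t)^(Suc a) * prod_list (map (\<lambda>b. 1 - b*q^t) bs)) = 0"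
    using Cons.IH[of "Suc a"] Cons.prems by simp
  have "(\<Sum>t\<le>N. cc N t * (q^t)^a * prod_list (map (\<lambda>b. 1 - b*q^t) (b#bs)))
     = (\<Sum>t\<le>N. cc N t * (q^t)^a * prod_list (map (\<lambda>b. 1 - b*q^t) bs))
       - b * (\<Sum>t\<le>N. cc N t * (q^t)^(Suc a) * prod_list (map (\<lambda>b. 1 - b*q^t) bs))"
    by (simp add: sum_distrib_left sum_subtractf[symmetric] algebra_simps)
  then show ?case using h1 h2 by simp
qed

end

lemma poly_roots:
  fixes p :: "complex poly"
  shows "degree p \<le> length rs \<Longrightarrow> distinct rs \<Longrightarrow> (\<forall>r\<in>set rs. poly p r = 0) \<Longrightarrow>
     p = smult (coeff p (length rs)) (\<Prod>r\<leftarrow>rs. [:-r,1:])"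
proof (induction rs arbitrary: p)
  case Nil
  then have "degree p = 0" by simp
  then show ?case using degree_0_id[of p] by simp
next
  case (Cons r rs)
  have "poly p r = 0" using Cons.prems by simp
  then have "[:-r,1:] dvd p" using poly_eq_0_iff_dvd by blast
  then obtain p' where pp: "p = [:-r,1:] * p'" by (erule dvdE)
  have dp: "degree p' \<le> length rs"
  proof (cases "p' = 0")
    case False
    then have "degree p = Suc (degree p')" unfolding pp by (subst degree_mult_eq) auto
    then show ?thesis using Cons.prems by simp
  qed simp
  have rts: "\<forall>r'\<in>set rs. poly p' r' = 0"
  proof
    fix r' assume r': "r' \<in> set rs"
    then have "r' \<noteq> r" using Cons.prems by auto
    moreover have "poly p r' = 0" using Cons.prems r' by simp
    ultimately show "poly p' r' = 0" unfolding pp by simp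
  qed
  have ih: "p' = smult (coeff p' (length rs)) (\<Prod>r\<leftarrow>rs. [:-r,1:])"
    using Cons.IH dp Cons.prems rts by simp
  have c: "coeff p (Suc (length rs)) = coeff p' (length rs)"
  proof -
    have "coeff p' (Suc (length rs)) = 0" using dp by (simp add: coeff_eq_0)
    then show ?thesis unfolding pp by (simp add: mult_pCons_left)
  qed
  define cc where "cc = coeff p' (length rs)"
  have ih': "p' = smult cc (\<Prod>r\<leftarrow>rs. [:-r,1:])" unfolding cc_def by (rule ih)
  have e1: "coeff p (length (r#rs)) = cc" using c by (simp add: cc_def)
  have e2: "p = smult cc ([:-r,1:] * (\<Prod>r\<leftarrow>rs. [:-r,1:]))" by (simp add: pp ih')
  show ?case unfolding e1 using e2 by simp
qed

definition XP :: "(nat \<Rightarrow> complex) \<Rightarrow> nat \<Rightarrow> complex poly" where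
  "XP c l = (\<Prod>i<l. [:1, - c i:])"

lemma XP_poly: "poly (XP c l) x = (\<Prod>i<l. 1 - c i * x)"
  unfolding XP_def poly_prod by (intro prod.cong refl) (simp add: algebra_simps)

lemma XP_deg: "(\<And>i. c i \<noteq> 0) \<Longrightarrow> degree (XP c l) = l \<and> coeff (XP c l) l = (\<Prod>i<l. - c i)"
proof (induction l)
  case 0 then show ?case by (simp add: XP_def)
next
  case (Suc l)
  have e: "XP c (Suc l) = XP c l * [:1, - c l:]" by (simp add: XP_def)
  have nz: "XP c l \<noteq> 0" using Suc by auto
  have d: "degree (XP c (Suc l)) = Suc l" unfolding e using Suc nz by (subst degree_mult_eq) auto
  have "coeff (XP c (Suc l)) (Suc l) = coeff (XP c l) l * (- c l)"
    using lead_coeff_mult[of "XP c l" "[:1, - c l:]"] d Suc unfolding e by simp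
  then show ?case using d Suc by simp
qed


lemma antisym_sum0:
  fixes f :: "nat \<Rightarrow> nat \<Rightarrow> complex"
  assumes as: "\<And>j k. f j k = - f k j"
  shows "(\<Sum>j\<in>A. \<Sum>k\<in>A. f j k) = 0"
proof -
  have "(\<Sum>j\<in>A. \<Sum>k\<in>A. f j k) = (\<Sum>k\<in>A. \<Sum>j\<in>A. f j k)" by (rule sum.swap)
  also have "\<dots> = (\<Sum>k\<in>A. \<Sum>j\<in>A. - f k j)"
    by (rule sum.cong[OF refl], rule sum.cong[OF refl], rule as)
  also have "\<dots> = - (\<Sum>k\<in>A. \<Sum>j\<in>A. f k j)" by (simp add: sum_negf)
  finally show ?thesis by simp
qed

lemma prod_to_list: "(\<Prod>i<L. 1 - \<beta> i * z) = prod_list (map (\<lambda>b. 1 - b*z) (map \<beta> [0..<L]))"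
  by (induction L) auto

locale mctx = qctx +
  fixes n h m s :: nat
  assumes hpos: "h > 0" and hnm: "h \<le> n - m" and sm: "s \<le> m"
begin

lemma mn: "m < n" using hpos hnm by simp
lemma shn: "s + h \<le> n"
proof -
  have "h + m \<le> n" using hnm mn by (simp add: le_diff_conv2)
  then show ?thesis using sm by simp
qed

definition K where "K j = qpoch (q powi (- int n)) q j * qpoch (q powi (int j - int m - int h + 1)) q (h - 1)
   / (qpoch q q (j - s) * qpoch q q (j + s))"
definition C where "C j k = K j * K k * (q^(2*j+k) - q^(j+2*k))"
definition LHSf where "LHSf x = (\<Sum>j=s..m. \<Sum>k=s..n. qpoch x q j * qpoch x q k * C j k)"

lemma powi_shift: "(1 - q powi (int k - int j)) * q^(2*j+k) = q^(2*j+k) - q^(j+2*k)"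
proof -
  have e: "int k - int j + int (2*j+k) = int (j+2*k)" by simp
  have "q powi (int k - int j) * q powi (int (2*j+k)) = q powi (int k - int j + int (2*j+k))"
    by (rule power_int_add[symmetric]) (use q0 in auto)
  also have "\<dots> = q powi (int (j+2*k))" unfolding e ..
  finally have "q powi (int k - int j) * q^(2*j+k) = q^(j+2*k)" by (simp only: power_int_of_nat)
  then show ?thesis by (simp add: algebra_simps)
qed

lemma term_eq:
  "qpoch (q powi (- int n)) q j * qpoch (q powi (- int n)) q k
      * qpoch x q j * qpoch x q k
      * qpoch (q powi (int j - int m - int h + 1)) q (h - 1)
      * qpoch (q powi (int k - int m - int h + 1)) q (h - 1)
      * (1 - q powi (int k - int j)) * q ^ (2 * j + k)
      / (qpoch q q (j - s) * qpoch q q (j + s) * qpoch q q (k - s) * qpoch q q (k + s))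
   = qpoch x q j * qpoch x q k * C j k"
proof -
  have "qpoch (q powi (- int n)) q j * qpoch (q powi (- int n)) q k
      * qpoch x q j * qpoch x q k
      * qpoch (q powi (int j - int m - int h + 1)) q (h - 1)
      * qpoch (q powi (int k - int m - int h + 1)) q (h - 1)
      * (1 - q powi (int k - int j)) * q ^ (2 * j + k)
      / (qpoch q q (j - s) * qpoch q q (j + s) * qpoch q q (k - s) * qpoch q q (k + s))
    = qpoch x q j * qpoch x q k * (K j * K k * ((1 - q powi (int k - int j)) * q ^ (2 * j + k)))"
    unfolding K_def by (simp add: qq_nz field_simps)
  then show ?thesis by (simp add: C_def powi_shift)
qed

definition XPs where "XPs = XP (\<lambda>i. q^(s+i))"
definition Lp where "Lp = (\<Sum>j=s..m. \<Sum>k=s..n. smult (C j k) (XPs (j-s) * XPs (k-s)))"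

lemma qpoch_split: "s \<le> j \<Longrightarrow> qpoch x q j = qpoch x q s * poly (XPs (j-s)) x"
proof -
  assume "s \<le> j"
  then have "qpoch x q j = qpoch x q s * qpoch (x*q^s) q (j-s)" using qpoch_add[of x q s "j-s"] by simp
  also have "qpoch (x*q^s) q (j-s) = poly (XPs (j-s)) x"
    by (simp add: XPs_def XP_poly qpoch_def power_add mult_ac)
  finally show ?thesis .
qed

lemma LHSf_poly: "LHSf x = qpoch x q s ^ 2 * poly Lp x"
proof -
  have "LHSf x = (\<Sum>j=s..m. \<Sum>k=s..n. qpoch x q s ^ 2 * (C j k * (poly (XPs (j-s)) x * poly (XPs (k-s)) x)))"
    unfolding LHSf_def
  proof (intro sum.cong refl)
    fix j k assume "j \<in> {s..m}" "k \<in> {s..n}"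
    then show "qpoch x q j * qpoch x q k * C j k = qpoch x q s ^ 2 * (C j k * (poly (XPs (j-s)) x * poly (XPs (k-s)) x))"
      by (simp add: qpoch_split[of j] qpoch_split[of k] power2_eq_square mult_ac)
  qed
  also have "\<dots> = qpoch x q s ^ 2 * poly Lp x"
    by (simp add: Lp_def poly_sum sum_distrib_left)
  finally show ?thesis .
qed

definition D where "D = (m - s) + (n - s)"

lemma XPs_deg: "degree (XPs l) = l" and XPs_lc: "coeff (XPs l) l = (\<Prod>i<l. (- (q^(s+i))))"
  using XP_deg[of "\<lambda>i. q^(s+i)" l] q0 by (simp_all add: XPs_def)

lemma Lp_deg: "degree Lp \<le> D"
  unfolding Lp_def
proof (intro degree_sum_le finite_atLeastAtMost)
  fix j k assume j: "j \<in> {s..m}" and k: "k \<in> {s..n}"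
  have "degree (smult (C j k) (XPs (j-s) * XPs (k-s))) \<le> degree (XPs (j-s) * XPs (k-s))"
    by (rule degree_smult_le)
  also have "\<dots> \<le> (j-s) + (k-s)" using degree_mult_le[of "XPs (j-s)" "XPs (k-s)"] by (simp add: XPs_deg)
  also have "\<dots> \<le> D"
  proof -
    have "j \<le> m" "k \<le> n" using j k by auto
    then show ?thesis unfolding D_def by arith
  qed
  finally show "degree (smult (C j k) (XPs (j-s) * XPs (k-s))) \<le> D" .
qed

definition lcc where "lcc = C m n * (\<Prod>i<m-s. (- (q^(s+i)))) * (\<Prod>i<n-s. (- (q^(s+i))))"

lemma Lp_coeff: "coeff Lp D = lcc"
proof -
  have t: "coeff (smult (C j k) (XPs (j-s) * XPs (k-s))) D = (if j = m \<and> k = n then lcc else 0)"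
    if j: "j \<in> {s..m}" and k: "k \<in> {s..n}" for j k
  proof (cases "j = m \<and> k = n")
    case True
    have "coeff (XPs (m-s) * XPs (n-s)) (m-s + (n-s)) = coeff (XPs (m-s)) (m-s) * coeff (XPs (n-s)) (n-s)"
      using coeff_mult_degree_sum[of "XPs (m-s)" "XPs (n-s)"] by (simp add: XPs_deg)
    then show ?thesis using True by (simp add: XPs_lc lcc_def D_def)
  next
    case False
    then have "(j-s) + (k-s) < D" using j k by (auto simp: D_def)
    then have "degree (XPs (j-s) * XPs (k-s)) < D"
      using degree_mult_le[of "XPs (j-s)" "XPs (k-s)"] by (simp add: XPs_deg)
    then show ?thesis using False by (auto simp: coeff_eq_0)
  qed
  have "coeff Lp D = (\<Sum>j=s..m. \<Sum>k=s..n. (if j = m \<and> k = n then lcc else 0))"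
    unfolding Lp_def coeff_sum by (intro sum.cong refl t) auto
  also have "\<dots> = (\<Sum>j=s..m. if j = m then lcc else 0)"
  proof (intro sum.cong refl)
    fix j
    show "(\<Sum>k=s..n. (if j = m \<and> k = n then lcc else 0)) = (if j = m then lcc else 0)"
    proof (cases "j = m")
      case True
      have "(\<Sum>k=s..n. (if k = n then lcc else 0)) = lcc" using sm mn by (subst sum.delta) auto
      then show ?thesis using True by simp
    qed simp
  qed
  also have "\<dots> = lcc" using sm by (subst sum.delta) auto
  finally show ?thesis .
qed

end

context mctx
begin

lemma X0: assumes "i < j" shows "qpoch (q powi (- int i)) q j = 0"
  by (rule qpoch_zero[OF assms]) (use q0 in \<open>simp add: power_int_minus\<close>)

lemma K0: assumes "m < k" "k < m + h" shows "K k = 0"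
proof -
  have "qpoch (q powi (int k - int m - int h + 1)) q (h - 1) = 0"
  proof (rule qpoch_zero[of "m + h - 1 - k"])
    show "m + h - 1 - k < h - 1" using assms by arith
    have "q powi (int k - int m - int h + 1) * q powi (int (m + h - 1 - k))
        = q powi (int k - int m - int h + 1 + int (m+h-1-k))"
      by (rule power_int_add[symmetric]) (use q0 in auto)
    also have "int k - int m - int h + 1 + int (m+h-1-k) = 0" using assms by (simp add: of_nat_diff)
    finally show "q powi (int k - int m - int h + 1) * q ^ (m + h - 1 - k) = 1" by simp
  qed
  then show ?thesis by (simp add: K_def)
qed

lemma root1: assumes "s \<le> i" "i < m + h" shows "LHSf (q powi (- int i)) = 0"
proof -
  define x where "x = q powi (- int i)"
  define M where "M = min m i"
  define T where "T = (\<lambda>j k. qpoch x q j * qpoch x q k * C j k)"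
  have XZ: "qpoch x q j = 0" if "i < j" for j unfolding x_def using X0 that .
  have inner: "(\<Sum>k=s..n. T j k) = (\<Sum>k=s..M. T j k)" for j
  proof (rule sum.mono_neutral_right)
    show "finite {s..n}" by simp
    show "{s..M} \<subseteq> {s..n}" using mn by (auto simp: M_def)
    show "\<forall>k\<in>{s..n} - {s..M}. T j k = 0"
    proof
      fix k assume k: "k \<in> {s..n} - {s..M}"
      show "T j k = 0"
      proof (cases "i < k")
        case True then show ?thesis by (simp add: T_def XZ)
      next
        case False
        then have "m < k" "k < m + h" using k assms by (auto simp: M_def)
        then show ?thesis by (simp add: T_def C_def K0)
      qed
    qed
  qed
  have outer: "(\<Sum>j=s..m. \<Sum>k=s..M. T j k) = (\<Sum>j=s..M. \<Sum>k=s..M. T j k)"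
  proof (rule sum.mono_neutral_right)
    show "finite {s..m}" by simp
    show "{s..M} \<subseteq> {s..m}" by (auto simp: M_def)
    show "\<forall>j\<in>{s..m} - {s..M}. (\<Sum>k=s..M. T j k) = 0"
    proof
      fix j assume j: "j \<in> {s..m} - {s..M}"
      then have "i < j" using assms by (auto simp: M_def)
      then show "(\<Sum>k=s..M. T j k) = 0" by (simp add: T_def XZ)
    qed
  qed
  have "LHSf x = (\<Sum>j=s..m. \<Sum>k=s..n. T j k)" by (simp add: LHSf_def T_def)
  also have "\<dots> = (\<Sum>j=s..m. \<Sum>k=s..M. T j k)" using inner by simp
  also have "\<dots> = (\<Sum>j=s..M. \<Sum>k=s..M. T j k)" by (rule outer)
  also have "\<dots> = 0" by (rule antisym_sum0) (simp add: T_def C_def algebra_simps)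
  finally show ?thesis unfolding x_def .
qed

lemma Qv: assumes "Suc s \<le> e" "e \<le> n - h" "a \<in> {1,2}"
  shows "(\<Sum>k=s..n. qpoch (q^e) q k * K k * (q^k)^a) = 0"
proof -
  define N where "N = n - s"
  define L1 where "L1 = e - 1 - s"
  define \<beta>1 where "\<beta>1 = (\<lambda>i::nat. q^(s+s+1+i))"
  define \<beta>2 where "\<beta>2 = (\<lambda>i::nat. q powi (int s - int m - int h + 1) * q^i)"
  define bs where "bs = map \<beta>1 [0..<L1] @ map \<beta>2 [0..<h-1]"
  define cst where "cst = qpoch (q powi (- int n)) q s * (q^s)^a / qpoch q q (e-1)"
  have nN: "n = N + s" using shn by (simp add: N_def)
  have trm: "qpoch (q^e) q (t+s) * K (t+s) * (q^(t+s))^a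
      = cst * (cc N t * (q^t)^a * prod_list (map (\<lambda>b. 1 - b*q^t) bs))" for t
  proof -
    define k where "k = t + s"
    have P1: "qpoch (q powi (- int n)) q k = qpoch (q powi (- int n)) q s * qpoch (q powi (- int N)) q t"
    proof -
      have "q powi (- int n) * q powi (int s) = q powi (- int n + int s)"
        by (rule power_int_add[symmetric]) (use q0 in auto)
      also have "- int n + int s = - int N" using nN by simp
      finally have "q powi (- int n) * q^s = q powi (- int N)" by simp
      then show ?thesis using qpoch_add[of "q powi (- int n)" q s t] by (simp add: k_def add.commute)
    qed
    have P2: "qpoch (q^e) q k * qpoch q q (e-1) = qpoch q q (k+s) * qpoch (q*q^(k+s)) q L1"
    proof -
      have qe: "q * q^(e-1) = q^e" using assms by (cases e) auto
      have h1: "qpoch q q ((e-1)+k) = qpoch q q (e-1) * qpoch (q^e) q k"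
        using qpoch_add[of q q "e-1" k] qe by simp
      have h2: "qpoch q q ((k+s)+L1) = qpoch q q (k+s) * qpoch (q*q^(k+s)) q L1"
        using qpoch_add[of q q "k+s" L1] by simp
      have eq: "(e-1)+k = (k+s)+L1" using assms by (simp add: L1_def)
      have "qpoch q q (e-1) * qpoch (q^e) q k = qpoch q q (k+s) * qpoch (q*q^(k+s)) q L1"
        using h1 h2 eq by metis
      then show ?thesis by (simp add: mult.commute)
    qed
    have P3: "qpoch (q*q^(k+s)) q L1 = (\<Prod>i<L1. 1 - \<beta>1 i * q^t)"
      unfolding qpoch_def \<beta>1_def k_def by (intro prod.cong refl) (simp add: power_add mult_ac)
    have P4: "qpoch (q powi (int k - int m - int h + 1)) q (h-1) = (\<Prod>i<h-1. 1 - \<beta>2 i * q^t)"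
    proof -
      have ek: "int k - int m - int h + 1 = int s - int m - int h + 1 + int t" by (simp add: k_def)
      have "q powi (int k - int m - int h + 1) = q powi (int s - int m - int h + 1 + int t)" unfolding ek ..
      also have "\<dots> = q powi (int s - int m - int h + 1) * q powi (int t)"
        by (rule power_int_add) (use q0 in auto)
      finally have "q powi (int k - int m - int h + 1) = q powi (int s - int m - int h + 1) * q^t"
        by (simp only: power_int_of_nat)
      then show ?thesis unfolding qpoch_def \<beta>2_def by (intro prod.cong refl) (simp add: mult_ac)
    qed
    have P5: "K k = qpoch (q powi (- int n)) q k * qpoch (q powi (int k - int m - int h + 1)) q (h-1)
          / (qpoch q q t * qpoch q q (k+s))"
      unfolding K_def k_def by simp
    have pl: "prod_list (map (\<lambda>b. 1 - b*q^t) bs) = (\<Prod>i<L1. 1 - \<beta>1 i * q^t) * (\<Prod>i<h-1. 1 - \<beta>2 i * q^t)"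
      unfolding bs_def by (simp add: prod_to_list)
    have qe: "qpoch (q^e) q k = qpoch q q (k+s) * qpoch (q*q^(k+s)) q L1 / qpoch q q (e-1)"
      using P2 qq_nz by (simp add: eq_divide_eq)
    have pw: "(q^k)^a = (q^s)^a * (q^t)^a" by (simp add: k_def power_add power_mult_distrib)
    show ?thesis
      unfolding k_def[symmetric] qe P5 P1 P3[symmetric] P4[symmetric] pl cst_def cc_def pw
      using qq_nz by (simp add: field_simps)
  qed
  have "(\<Sum>k=s..n. qpoch (q^e) q k * K k * (q^k)^a) = (\<Sum>t=0..N. qpoch (q^e) q (t+s) * K (t+s) * (q^(t+s))^a)"
    using sum.shift_bounds_cl_nat_ivl[of "\<lambda>k. qpoch (q^e) q k * K k * (q^k)^a" 0 s N] nN by simp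
  also have "\<dots> = cst * (\<Sum>t\<le>N. cc N t * (q^t)^a * prod_list (map (\<lambda>b. 1 - b*q^t) bs))"
    by (simp add: trm sum_distrib_left atLeast0AtMost)
  also have "(\<Sum>t\<le>N. cc N t * (q^t)^a * prod_list (map (\<lambda>b. 1 - b*q^t) bs)) = 0"
    by (rule V_list) (use assms hpos in \<open>auto simp: bs_def L1_def N_def\<close>)
  finally show ?thesis by simp
qed

lemma root2: assumes "Suc s \<le> e" "e \<le> n - h" shows "LHSf (q^e) = 0"
proof -
  define x where "x = q^e"
  define Q1 where "Q1 = (\<Sum>k=s..n. qpoch x q k * K k * (q^k)^1)"
  define Q2 where "Q2 = (\<Sum>k=s..n. qpoch x q k * K k * (q^k)^2)"
  have Q1z: "Q1 = 0" unfolding Q1_def x_def by (rule Qv) (use assms in auto)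
  have Q2z: "Q2 = 0" unfolding Q2_def x_def by (rule Qv) (use assms in auto)
  have row: "(\<Sum>k=s..n. qpoch x q j * qpoch x q k * C j k)
      = (qpoch x q j * K j * q^(2*j)) * Q1 - (qpoch x q j * K j * q^j) * Q2" for j
  proof -
    have "(\<Sum>k=s..n. qpoch x q j * qpoch x q k * C j k)
       = (\<Sum>k=s..n. (qpoch x q j * K j * q^(2*j)) * (qpoch x q k * K k * (q^k)^1)
                   - (qpoch x q j * K j * q^j) * (qpoch x q k * K k * (q^k)^2))"
    proof (intro sum.cong refl)
      fix k
      have a: "q^(2*j+k) = q^(2*j) * q^k" by (simp add: power_add)
      have b: "q^(j+2*k) = q^j * (q^k)^2" by (simp add: power_add power_mult[symmetric] mult.commute)
      show "qpoch x q j * qpoch x q k * C j k = (qpoch x q j * K j * q^(2*j)) * (qpoch x q k * K k * (q^k)^1)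
                   - (qpoch x q j * K j * q^j) * (qpoch x q k * K k * (q^k)^2)"
        unfolding C_def a b by (simp add: algebra_simps)
    qed
    also have "\<dots> = (qpoch x q j * K j * q^(2*j)) * Q1 - (qpoch x q j * K j * q^j) * Q2"
      unfolding Q1_def Q2_def by (simp add: sum_subtractf sum_distrib_left)
    finally show ?thesis .
  qed
  have "LHSf x = 0" unfolding LHSf_def row Q1z Q2z by simp
  then show ?thesis unfolding x_def .
qed

end

lemma poly_lin_prod: fixes x :: complex shows "poly (\<Prod>r\<leftarrow>xs. [:-r,1:]) x = prod_list (map (\<lambda>r. x - r) xs)"
  by (induction xs) (auto simp: algebra_simps)

lemma prod_upt: "prod f {a..<b} = prod_list (map f [a..<b])"
  using prod.distinct_set_conv_list[of "[a..<b]" f] by simp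

context mctx
begin

definition rs where "rs = map (\<lambda>i. q powi (- int i)) [s..<m+h] @ map (\<lambda>e. q^e) [Suc s..<Suc (n-h)]"

lemma rs_len: "length rs = D"
  using shn sm unfolding rs_def D_def by (simp, arith)

lemma rs_dist: "distinct rs"
proof -
  have i1: "inj_on (\<lambda>i. q powi (- int i)) (set [s..<m+h])"
    by (rule inj_onI) (simp add: powi_inj)
  have i2: "inj_on (\<lambda>e::nat. q^e) (set [Suc s..<Suc (n-h)])"
  proof (rule inj_onI)
    fix a b :: nat assume ab: "q^a = q^b"
    show "a = b" using ab powi_inj[of "int a" "int b"] by simp
  qed
  have dj: "set (map (\<lambda>i. q powi (- int i)) [s..<m+h]) \<inter> set (map (\<lambda>e. q^e) [Suc s..<Suc (n-h)]) = {}"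
  proof (rule ccontr)
    assume "\<not> ?thesis"
    then obtain i e where e: "Suc s \<le> e" and eq: "q powi (- int i) = q^e" by auto
    then have "- int i = int e" using powi_inj[of "- int i" "int e"] by simp
    then show False using e by simp
  qed
  show ?thesis unfolding rs_def using i1 i2 dj by (simp add: distinct_map)
qed

lemma qs_nz1: "s \<le> i \<Longrightarrow> qpoch (q powi (- int i)) q s \<noteq> 0"
proof (rule qpoch_nz)
  fix l assume "s \<le> i" "l < s"
  have "q powi (- int i) * q powi (int l) = q powi (- int i + int l)"
    by (rule power_int_add[symmetric]) (use q0 in auto)
  moreover have "q powi (- int i + int l) \<noteq> 1" using \<open>s \<le> i\<close> \<open>l < s\<close> by (simp add: powi_eq1)
  ultimately show "q powi (- int i) * q ^ l \<noteq> 1" by simp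
qed

lemma qs_nz2: "0 < e \<Longrightarrow> qpoch (q^e) q s \<noteq> 0"
proof (rule qpoch_nz)
  fix l assume "0 < e"
  then show "q^e * q^l \<noteq> 1" using qroot[of "e+l"] by (simp add: power_add)
qed

lemma rs_roots: "\<forall>r\<in>set rs. poly Lp r = 0"
proof
  fix r assume "r \<in> set rs"
  then consider (a) i where "s \<le> i" "i < m+h" "r = q powi (- int i)"
    | (b) e where "Suc s \<le> e" "e \<le> n - h" "r = q^e"
    unfolding rs_def by auto
  then show "poly Lp r = 0"
  proof cases
    case a
    then have "qpoch r q s ^ 2 * poly Lp r = 0" using root1 LHSf_poly by metis
    then show ?thesis using qs_nz1 a by simp
  next
    case b
    then have "qpoch r q s ^ 2 * poly Lp r = 0" using root2 LHSf_poly by metis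
    then show ?thesis using qs_nz2[of e] b by simp
  qed
qed

lemma Lp_eval: "poly Lp x = lcc * prod_list (map (\<lambda>r. x - r) rs)"
proof -
  have "Lp = smult (coeff Lp (length rs)) (\<Prod>r\<leftarrow>rs. [:-r,1:])"
    by (rule poly_roots) (use Lp_deg rs_len rs_dist rs_roots in auto)
  then have "poly Lp x = coeff Lp (length rs) * poly (\<Prod>r\<leftarrow>rs. [:-r,1:]) x" by (metis poly_smult)
  also have "poly (\<Prod>r\<leftarrow>rs. [:-r,1:]) x = prod_list (map (\<lambda>r. x - r) rs)"
    by (rule poly_lin_prod)
  finally show ?thesis using rs_len Lp_coeff by simp
qed

lemma rs_prod: "prod_list (map (\<lambda>r. x - r) rs)
   = (\<Prod>i\<in>{s..<m+h}. x - q powi (- int i)) * (\<Prod>e\<in>{Suc s..<Suc (n-h)}. x - q^e)"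
  unfolding rs_def prod_upt by (simp del: upt_Suc add: o_def)

lemma X1: "qpoch x q (m+h) = qpoch x q s * (\<Prod>i\<in>{s..<m+h}. - (q^i)) * (\<Prod>i\<in>{s..<m+h}. x - q powi (- int i))"
proof -
  have "qpoch x q (m+h) = qpoch x q s * qpoch (x*q^s) q (m+h-s)"
    using qpoch_add[of x q s "m+h-s"] sm by simp
  also have "qpoch (x*q^s) q (m+h-s) = (\<Prod>i\<in>{s..<m+h}. 1 - x * q^i)"
  proof -
    have "qpoch (x*q^s) q (m+h-s) = (\<Prod>l\<in>{0..<m+h-s}. 1 - x * q^(l+s))"
      unfolding qpoch_def by (simp add: atLeast0LessThan power_add mult_ac)
    also have "\<dots> = (\<Prod>i\<in>{0+s..<(m+h-s)+s}. 1 - x * q^i)"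
      by (rule prod.shift_bounds_nat_ivl[symmetric])
    finally show ?thesis using sm by simp
  qed
  also have "(\<Prod>i\<in>{s..<m+h}. 1 - x * q^i) = (\<Prod>i\<in>{s..<m+h}. (- (q^i)) * (x - q powi (- int i)))"
  proof (intro prod.cong refl)
    fix i
    have "q^i * q powi (- int i) = 1" using q0 by (simp add: power_int_minus)
    then show "1 - x * q^i = (- (q^i)) * (x - q powi (- int i))" by (simp add: algebra_simps)
  qed
  also have "(\<Prod>i\<in>{s..<m+h}. (- (q^i)) * (x - q powi (- int i)))
     = (\<Prod>i\<in>{s..<m+h}. - (q^i)) * (\<Prod>i\<in>{s..<m+h}. x - q powi (- int i))"
    by (rule prod.distrib)
  finally show ?thesis by (simp only: mult.assoc)
qed

lemma X2: assumes "x \<noteq> 0"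
  shows "qpoch (q ^ (s + 1) / x) q (n - s - h) * x ^ (n - s - h) = (\<Prod>e\<in>{Suc s..<Suc (n-h)}. x - q^e)"
proof -
  have "qpoch (q ^ (s + 1) / x) q (n - s - h) * x ^ (n - s - h)
      = (\<Prod>l\<in>{0..<n-s-h}. (1 - q ^ (s + 1) / x * q^l) * x)"
    unfolding qpoch_def by (simp add: prod.distrib atLeast0LessThan)
  also have "\<dots> = (\<Prod>l\<in>{0..<n-s-h}. x - q^(l + Suc s))"
    using assms by (intro prod.cong refl) (simp add: field_simps power_add)
  also have "\<dots> = (\<Prod>e\<in>{0 + Suc s..<(n-s-h) + Suc s}. x - q^e)"
    by (rule prod.shift_bounds_nat_ivl[symmetric])
  also have "{0 + Suc s..<(n-s-h) + Suc s} = {Suc s..<Suc (n-h)}" using shn by auto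
  finally show ?thesis .
qed

end

lemma sumG1: "2 * int (\<Sum>i<L. (c + i)) = 2 * int L * int c + int L * (int L - 1)"
  by (induction L) (simp_all add: algebra_simps)

lemma sumG2: "L \<le> N \<Longrightarrow> 2 * int (\<Sum>i<L. (N - i)) = 2 * int L * int N - int L * (int L - 1)"
  by (induction L) (simp_all add: algebra_simps of_nat_diff)

context qctx
begin

lemma prod_negpow: "finite A \<Longrightarrow> (\<Prod>i\<in>A. - (q^(f i))) = (-1)^(card A) * q^(\<Sum>i\<in>A. f i)"
proof -
  assume fin: "finite A"
  have "(\<Prod>i\<in>A. - (q^(f i))) = (\<Prod>i\<in>A. (-1) * q^(f i))" by simp
  also have "\<dots> = (\<Prod>i\<in>A. (-1::complex)) * (\<Prod>i\<in>A. q^(f i))" by (rule prod.distrib)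
  also have "\<dots> = (-1)^(card A) * q^(\<Sum>i\<in>A. f i)" by (simp add: power_sum)
  finally show ?thesis .
qed

lemma qpoch_neg: assumes "M \<le> N"
  shows "qpoch (q powi (- int N)) q M * qpoch q q (N-M) * q^(\<Sum>i<M. N - i) = (-1)^M * qpoch q q N"
proof -
  have f: "(1 - q powi (- int N) * q^i) * q^(N-i) = - (1 - q^(N-i))" if "i < M" for i
  proof -
    have a1: "q powi (- int N + int i) = q powi (- int N) * q powi (int i)"
      by (rule power_int_add) (use q0 in auto)
    have a2: "q powi (- int N + int i + int (N-i)) = q powi (- int N + int i) * q powi (int (N-i))"
      by (rule power_int_add) (use q0 in auto)
    have a3: "- int N + int i + int (N-i) = 0" using that assms by (simp add: of_nat_diff)
    have "q powi (- int N) * q powi (int i) * q powi (int (N-i)) = 1"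
      by (simp only: a1[symmetric] a2[symmetric] a3 power_int_0_right)
    then have "q powi (- int N) * q^i * q^(N-i) = 1" by (simp only: power_int_of_nat)
    then show ?thesis by (simp add: algebra_simps)
  qed
  have "qpoch (q powi (- int N)) q M * q^(\<Sum>i<M. N - i)
      = (\<Prod>i<M. (1 - q powi (- int N) * q^i) * q^(N-i))"
    by (simp add: qpoch_def power_sum prod.distrib)
  also have "\<dots> = (\<Prod>i<M. (-1) * (1 - q^(N-i)))" by (intro prod.cong refl) (simp add: f)
  also have "\<dots> = (\<Prod>i<M. (-1::complex)) * (\<Prod>i<M. 1 - q^(N-i))" by (rule prod.distrib)
  also have "(\<Prod>i<M. (-1::complex)) = (-1)^M" by simp
  also have "(\<Prod>i<M. 1 - q^(N-i)) = (\<Prod>i<M. 1 - q^(N-M+1+i))"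
  proof -
    have "(\<Prod>i<M. 1 - q^(N-M+1+(M - Suc i))) = (\<Prod>i<M. 1 - q^(N-M+1+i))"
      by (rule prod.nat_diff_reindex)
    moreover have "(\<Prod>i<M. 1 - q^(N-M+1+(M - Suc i))) = (\<Prod>i<M. 1 - q^(N-i))"
    proof (intro prod.cong refl)
      fix i assume "i \<in> {..<M}"
      then have eq: "N-M+1+(M - Suc i) = N - i" using assms by auto
      show "1 - q^(N-M+1+(M - Suc i)) = 1 - q^(N-i)" unfolding eq ..
    qed
    ultimately show ?thesis by simp
  qed
  also have "(\<Prod>i<M. 1 - q^(N-M+1+i)) = qpoch (q*q^(N-M)) q M"
    by (simp add: qpoch_def power_add mult_ac)
  finally have e1: "qpoch (q powi (- int N)) q M * q^(\<Sum>i<M. N - i) = (-1)^M * qpoch (q*q^(N-M)) q M" .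
  have e2: "qpoch q q N = qpoch q q (N-M) * qpoch (q*q^(N-M)) q M"
    using qpoch_add[of q q "N-M" M] assms by simp
  show ?thesis using e1 e2 by (simp add: mult_ac)
qed

end

context mctx
begin

lemma powi_add: "q powi (a + b) = q powi a * q powi b"
  by (rule power_int_add) (use q0 in auto)

definition "Sm = (\<Sum>i<m. n - i)"
definition "Sn = (\<Sum>i<n. n - i)"
definition "Sh = (\<Sum>i<h-1. h - 1 - i)"
definition "P1 = (\<Sum>i<m-s. s + i)"
definition "P2 = (\<Sum>i<n-s. s + i)"
definition "P3 = (\<Sum>i\<in>{s..<m+h}. i)"

lemma Fa: "qpoch (q powi (- int n)) q n * q^Sn = (-1)^n * qpoch q q n"
proof -
  have "qpoch (q powi (- int n)) q n * qpoch q q (n-n) * q^(\<Sum>i<n. n - i) = (-1)^n * qpoch q q n"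
    by (rule qpoch_neg) simp
  then show ?thesis by (simp only: Sn_def[symmetric] diff_self_eq_0 qpoch_0 mult_1_right)
qed

lemma Fb: "qpoch (q powi (- int n)) q m * qpoch q q (n-m) * q^Sm = (-1)^m * qpoch q q n"
  unfolding Sm_def by (rule qpoch_neg) (use mn in simp)

lemma Fc: "qpoch (q powi (int m - int m - int h + 1)) q (h-1) * q^Sh = (-1)^(h-1) * qpoch q q (h-1)"
proof -
  have e: "int m - int m - int h + 1 = - int (h-1)" using hpos by (simp add: of_nat_diff)
  have "qpoch (q powi (- int (h-1))) q (h-1) * qpoch q q ((h-1)-(h-1)) * q^(\<Sum>i<h-1. h - 1 - i)
      = (-1)^(h-1) * qpoch q q (h-1)"
    by (rule qpoch_neg) simp
  then show ?thesis unfolding e by (simp only: Sh_def[symmetric] diff_self_eq_0 qpoch_0 mult_1_right)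
qed

lemma Fd: "qpoch (q powi (int n - int m - int h + 1)) q (h-1) * (1 - q^(n-m)) * qpoch q q (n-m-h) = qpoch q q (n-m)"
proof -
  have e1: "int n - int m - int h + 1 = int (n-m-h) + 1" using shn mn hnm by (simp add: of_nat_diff)
  have c: "q powi (int n - int m - int h + 1) = q * q^(n-m-h)"
    unfolding e1 powi_add by simp
  have hh: "h = Suc (h-1)" using hpos by simp
  have "qpoch q q ((n-m-h) + h) = qpoch q q (n-m-h) * qpoch (q * q^(n-m-h)) q h"
    by (rule qpoch_add)
  also have "qpoch (q * q^(n-m-h)) q h = qpoch (q * q^(n-m-h)) q (h-1) * (1 - q * q^(n-m-h) * q^(h-1))"
    by (subst hh, subst qpoch_Suc) simp
  also have "q * q^(n-m-h) * q^(h-1) = q^(n-m)"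
  proof -
    have eq: "Suc ((n-m-h) + (h-1)) = n - m" using hnm hpos by simp
    have "q * q^(n-m-h) * q^(h-1) = q^(Suc ((n-m-h) + (h-1)))" by (simp add: power_add)
    then show ?thesis unfolding eq .
  qed
  also have "(n-m-h) + h = n - m" using hnm by simp
  finally show ?thesis unfolding c by (simp add: mult_ac)
qed

lemma Km_form: "K m * (q^(Sm+Sh) * qpoch q q (n-m) * qpoch q q (m-s) * qpoch q q (m+s))
   = (-1)^(m+h-1) * qpoch q q n * qpoch q q (h-1)"
proof -
  have "K m * (q^(Sm+Sh) * qpoch q q (n-m) * qpoch q q (m-s) * qpoch q q (m+s))
      = (qpoch (q powi (- int n)) q m * qpoch q q (n-m) * q^Sm) * (qpoch (q powi (int m - int m - int h + 1)) q (h-1) * q^Sh)"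
    unfolding K_def using qq_nz by (simp add: field_simps power_add)
  also have "\<dots> = (-1)^m * (-1)^(h-1) * qpoch q q n * qpoch q q (h-1)" unfolding Fb Fc by (simp add: mult_ac)
  also have "(-1::complex)^m * (-1)^(h-1) = (-1)^(m+h-1)" using hpos by (simp add: power_add[symmetric])
  finally show ?thesis .
qed

lemma Kn_form: "K n * (1 - q^(n-m)) * (q^Sn * qpoch q q (n-m-h) * qpoch q q (n-s) * qpoch q q (n+s))
   = (-1)^n * qpoch q q n * qpoch q q (n-m)"
proof -
  have "K n * (1 - q^(n-m)) * (q^Sn * qpoch q q (n-m-h) * qpoch q q (n-s) * qpoch q q (n+s))
      = (qpoch (q powi (- int n)) q n * q^Sn) * (qpoch (q powi (int n - int m - int h + 1)) q (h-1) * (1 - q^(n-m)) * qpoch q q (n-m-h))"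
    unfolding K_def using qq_nz by (simp add: field_simps)
  also have "\<dots> = (-1)^n * qpoch q q n * qpoch q q (n-m)" unfolding Fa Fd by (simp add: mult_ac)
  finally show ?thesis .
qed

end

lemma expo_alg:
  fixes m n h s p1 p2 p3 sm sn sh xd :: int
  assumes "2*p1 = 2*(m-s)*s + (m-s)*((m-s)-1)"
    "2*p2 = 2*(n-s)*s + (n-s)*((n-s)-1)"
    "2*p3 = 2*(m+h-s)*s + (m+h-s)*((m+h-s)-1)"
    "2*sm = 2*m*n - m*(m-1)" "2*sn = 2*n*n - n*(n-1)" "2*sh = 2*(h-1)*(h-1) - (h-1)*((h-1)-1)"
    "2*xd = m^2 + 3*m - s^2 + s"
  shows "2*(p3 + (xd - m*n - m*h - h^2 + h) + sm + sh + sn) = 2*(2*m+n+p1+p2)"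
  using assms by (simp add: algebra_simps power2_eq_square)

context mctx
begin

definition "EE = (int m ^ 2 + 3 * int m - int s ^ 2 + int s) div 2
                - int m * int n - int m * int h - int h ^ 2 + int h"

lemma sgv: "(-1::complex) powi (int m - int s - 1) = - ((-1)^(m-s))"
proof -
  define X where "X = (-1::complex) powi (int (m-s) - 1)"
  have a: "X * (-1) = (-1) powi int (m-s)" unfolding X_def
    by (rule power_int_minus_mult) simp
  have c: "(-1::complex) powi int (m-s) = (-1)^(m-s)" by (simp only: power_int_of_nat)
  have "X = - (X * (-1))" by simp
  also have "\<dots> = - ((-1)^(m-s))" unfolding a c ..
  finally have X: "X = - ((-1)^(m-s))" .
  have b: "int m - int s - 1 = int (m-s) - 1" using sm by (simp add: of_nat_diff)
  show ?thesis unfolding b using X unfolding X_def .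
qed

lemma expo: "int P3 + EE + int Sm + int Sh + int Sn = int (2*m+n+P1+P2)"
proof -
  have fP1: "2 * int P1 = 2 * int (m-s) * int s + int (m-s) * (int (m-s) - 1)"
    unfolding P1_def by (rule sumG1)
  have fP2: "2 * int P2 = 2 * int (n-s) * int s + int (n-s) * (int (n-s) - 1)"
    unfolding P2_def by (rule sumG1)
  have p3: "P3 = (\<Sum>i<m+h-s. s + i)"
  proof -
    have "P3 = (\<Sum>i\<in>{0+s..<(m+h-s)+s}. i)" unfolding P3_def using sm by simp
    also have "\<dots> = (\<Sum>i\<in>{0..<m+h-s}. i + s)" by (rule sum.shift_bounds_nat_ivl)
    finally show ?thesis by (simp add: atLeast0LessThan add.commute)
  qed
  have fP3: "2 * int P3 = 2 * int (m+h-s) * int s + int (m+h-s) * (int (m+h-s) - 1)"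
    unfolding p3 by (rule sumG1)
  have fSm: "2 * int Sm = 2 * int m * int n - int m * (int m - 1)"
    unfolding Sm_def by (rule sumG2) (use mn in simp)
  have fSn: "2 * int Sn = 2 * int n * int n - int n * (int n - 1)"
    unfolding Sn_def by (rule sumG2) simp
  have fSh: "2 * int Sh = 2 * int (h-1) * int (h-1) - int (h-1) * (int (h-1) - 1)"
    unfolding Sh_def by (rule sumG2) simp
  have ev: "even (int m ^ 2 + 3 * int m - int s ^ 2 + int s)"
    by (simp add: power2_eq_square even_add even_mult_iff)
  have fE: "2 * ((int m ^ 2 + 3 * int m - int s ^ 2 + int s) div 2) = int m ^ 2 + 3 * int m - int s ^ 2 + int s"
    using ev by (rule even_two_times_div_two)
  have d1: "int (m-s) = int m - int s" "int (n-s) = int n - int s" "int (m+h-s) = int m + int h - int s"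
    "int (h-1) = int h - 1"
    using sm mn hpos by (simp_all add: of_nat_diff)
  have "2 * (int P3 + EE + int Sm + int Sh + int Sn) = 2 * (2*int m + int n + int P1 + int P2)"
    unfolding EE_def
    by (rule expo_alg[OF fP1[unfolded d1] fP2[unfolded d1] fP3[unfolded d1] fSm fSn fSh[unfolded d1] fE])
  then show ?thesis by simp
qed

end

lemma sgn_helper1: "(even K1 \<longleftrightarrow> \<not> even K2) \<Longrightarrow> (-1::complex)^K1 = - ((-1)^K2)"
  by (simp add: minus_one_power_iff)

lemma sgn_helper2: "- ((-1::complex)^(a+b)) = (-1)^a / (- ((-1)^b))"
  by (simp add: minus_one_power_iff power_add)

context mctx
begin

lemma diffpow: "q^(2*m+n) - q^(m+2*n) = q^(2*m+n) * (1 - q^(n-m))"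
proof -
  have e: "m + 2*n = (2*m+n) + (n-m)" using mn by simp
  have "q^(m+2*n) = q^(2*m+n) * q^(n-m)" unfolding e by (rule power_add)
  then show ?thesis by (simp add: algebra_simps)
qed

lemma Pi1: "(\<Prod>i<m-s. - (q^(s+i))) = (-1)^(m-s) * q^P1"
  using prod_negpow[of "{..<m-s}" "\<lambda>i. s+i"] by (simp add: P1_def)

lemma Pi2: "(\<Prod>i<n-s. - (q^(s+i))) = (-1)^(n-s) * q^P2"
  using prod_negpow[of "{..<n-s}" "\<lambda>i. s+i"] by (simp add: P2_def)

lemma Pi3: "(\<Prod>i\<in>{s..<m+h}. - (q^i)) = (-1)^(m+h-s) * q^P3"
  using prod_negpow[of "{s..<m+h}" "\<lambda>i. i"] by (simp add: P3_def)

lemma const_eq: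
  "(qpoch q q n)^2 * qpoch q q (h-1) * (\<Prod>i\<in>{s..<m+h}. - (q^i)) * q powi EE
    / ((-1) powi (int m - int s - 1) * qpoch q q (m-s) * qpoch q q (m+s) * qpoch q q (n-s)
       * qpoch q q (n+s) * qpoch q q (n-m-h)) = lcc"
  (is "?L = _")
proof -
  define W1 where "W1 = q^(Sm+Sh) * qpoch q q (n-m) * qpoch q q (m-s) * qpoch q q (m+s)"
  define W2 where "W2 = q^Sn * qpoch q q (n-m-h) * qpoch q q (n-s) * qpoch q q (n+s)"
  define Z where "Z = (qpoch q q n)^2 * qpoch q q (h-1) * qpoch q q (n-m)"
  define \<sigma> where "\<sigma> = (-1::complex)^(m+h-1) * (-1)^n * (-1)^(m-s) * (-1)^(n-s)"
  define X where "X = 2*m+n+P1+P2"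
  define qE where "qE = q powi EE"
  have W1nz: "W1 \<noteq> 0" unfolding W1_def using qq_nz q0 by simp
  have W2nz: "W2 \<noteq> 0" unfolding W2_def using qq_nz q0 by simp
  have R: "lcc * (W1 * W2) = Z * \<sigma> * q^X"
  proof -
    have "lcc * (W1 * W2) = (K m * W1) * (K n * (1 - q^(n-m)) * W2) * q^(2*m+n)
           * ((-1)^(m-s) * q^P1) * ((-1)^(n-s) * q^P2)"
      unfolding lcc_def C_def diffpow Pi1 Pi2 by (simp add: mult_ac)
    also have "\<dots> = ((-1)^(m+h-1) * qpoch q q n * qpoch q q (h-1)) * ((-1)^n * qpoch q q n * qpoch q q (n-m))
           * q^(2*m+n) * ((-1)^(m-s) * q^P1) * ((-1)^(n-s) * q^P2)"
      unfolding W1_def W2_def Km_form Kn_form ..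
    also have "\<dots> = Z * \<sigma> * q^X" unfolding Z_def \<sigma>_def X_def by (simp add: power_add power2_eq_square mult_ac)
    finally show ?thesis .
  qed
  have I: "q^P3 * qE * q^(Sm+Sh) * q^Sn = q^X"
  proof -
    have "q^X = q powi (int P3 + EE + int Sm + int Sh + int Sn)"
      unfolding X_def expo power_int_of_nat ..
    also have "\<dots> = q^P3 * qE * q^Sm * q^Sh * q^Sn" unfolding qE_def by (simp only: powi_add power_int_of_nat)
    finally show ?thesis by (simp add: power_add mult_ac)
  qed
  have par: "even (m+h-1+n+(m-s)+(n-s)) \<longleftrightarrow> \<not> even ((m+h-s)+(m-s))"
  proof -
    have e: "Suc (m+h-1+n+(m-s)+(n-s)) = ((m+h-s)+(m-s)) + 2*n" using hpos sm mn by arith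
    have "even (Suc (m+h-1+n+(m-s)+(n-s))) \<longleftrightarrow> even ((m+h-s)+(m-s))" unfolding e by simp
    then show ?thesis unfolding even_Suc by blast
  qed
  have II: "(-1::complex)^(m+h-s) / (- ((-1)^(m-s))) = \<sigma>"
  proof -
    have "\<sigma> = (-1)^(m+h-1+n+(m-s)+(n-s))" unfolding \<sigma>_def by (simp only: power_add)
    also have "\<dots> = - ((-1)^((m+h-s)+(m-s)))" using par by (rule sgn_helper1)
    also have "\<dots> = (-1::complex)^(m+h-s) / (- ((-1)^(m-s)))"
      by (rule sgn_helper2)
    finally show ?thesis by simp
  qed
  have L: "?L * (W1 * W2) = Z * ((-1)^(m+h-s) / (- ((-1)^(m-s)))) * (q^P3 * qE * q^(Sm+Sh) * q^Sn)"
    unfolding sgv Pi3 W1_def W2_def Z_def qE_def[symmetric] using qq_nz by (simp add: field_simps)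
  have eq: "?L * (W1 * W2) = lcc * (W1 * W2)" unfolding L I II R ..
  have nz: "W1 * W2 \<noteq> 0" using W1nz W2nz by simp
  show ?thesis by (rule mult_right_cancel[OF nz, THEN iffD1, OF eq])
qed

end

context mctx
begin

lemma main_eq:
  assumes xnz: "x \<noteq> 0"
  shows "(\<Sum>j=s..m. \<Sum>k=s..n.
      qpoch (q powi (- int n)) q j * qpoch (q powi (- int n)) q k
      * qpoch x q j * qpoch x q k
      * qpoch (q powi (int j - int m - int h + 1)) q (h - 1)
      * qpoch (q powi (int k - int m - int h + 1)) q (h - 1)
      * (1 - q powi (int k - int j)) * q ^ (2 * j + k)
      / (qpoch q q (j - s) * qpoch q q (j + s) * qpoch q q (k - s) * qpoch q q (k + s)))
    = (qpoch q q n) ^ 2 * qpoch q q (h - 1) * qpoch x q s * qpoch x q (m + h)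
      * qpoch (q ^ (s + 1) / x) q (n - s - h) * x ^ (n - s - h)
      * q powi ((int m ^ 2 + 3 * int m - int s ^ 2 + int s) div 2
                - int m * int n - int m * int h - int h ^ 2 + int h)
      / ((-1) powi (int m - int s - 1) * qpoch q q (m - s) * qpoch q q (m + s)
         * qpoch q q (n - s) * qpoch q q (n + s) * qpoch q q (n - m - h))"
proof -
  define PA where "PA = (\<Prod>i\<in>{s..<m+h}. x - q powi (- int i))"
  define PB where "PB = (\<Prod>e\<in>{Suc s..<Suc (n-h)}. x - q^e)"
  define Den where "Den = (-1) powi (int m - int s - 1) * qpoch q q (m - s) * qpoch q q (m + s)
         * qpoch q q (n - s) * qpoch q q (n + s) * qpoch q q (n - m - h)"
  have "(\<Sum>j=s..m. \<Sum>k=s..n.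
      qpoch (q powi (- int n)) q j * qpoch (q powi (- int n)) q k
      * qpoch x q j * qpoch x q k
      * qpoch (q powi (int j - int m - int h + 1)) q (h - 1)
      * qpoch (q powi (int k - int m - int h + 1)) q (h - 1)
      * (1 - q powi (int k - int j)) * q ^ (2 * j + k)
      / (qpoch q q (j - s) * qpoch q q (j + s) * qpoch q q (k - s) * qpoch q q (k + s))) = LHSf x"
    unfolding LHSf_def by (intro sum.cong refl) (rule term_eq)
  also have "\<dots> = qpoch x q s ^ 2 * (lcc * (PA * PB))"
    unfolding LHSf_poly Lp_eval rs_prod PA_def PB_def ..
  also have "\<dots> = ((qpoch q q n)^2 * qpoch q q (h-1) * (\<Prod>i\<in>{s..<m+h}. - (q^i)) * q powi EE / Den)
       * (qpoch x q s ^ 2 * (PA * (qpoch (q ^ (s + 1) / x) q (n - s - h) * x ^ (n - s - h))))"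
    unfolding Den_def const_eq PB_def X2[OF xnz] by (simp only: mult_ac)
  also have "\<dots> = (qpoch q q n) ^ 2 * qpoch q q (h - 1) * qpoch x q s * qpoch x q (m + h)
      * qpoch (q ^ (s + 1) / x) q (n - s - h) * x ^ (n - s - h) * q powi EE / Den"
    unfolding X1 PA_def by (simp add: power2_eq_square mult_ac times_divide_eq_left)
  finally show ?thesis unfolding Den_def EE_def .
qed

end

theorem lemma4p3:
  fixes n h m s :: nat and q x :: complex
  assumes "n > 0" and "h > 0" and "h \<le> n - m" and "s \<le> m"
    and "q \<noteq> 0" and "x \<noteq> 0" and "\<forall>i::nat. i > 0 \<longrightarrow> q ^ i \<noteq> 1"
  shows "(\<Sum>j=s..m. \<Sum>k=s..n.
      qpoch (q powi (- int n)) q j * qpoch (q powi (- int n)) q k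
      * qpoch x q j * qpoch x q k
      * qpoch (q powi (int j - int m - int h + 1)) q (h - 1)
      * qpoch (q powi (int k - int m - int h + 1)) q (h - 1)
      * (1 - q powi (int k - int j)) * q ^ (2 * j + k)
      / (qpoch q q (j - s) * qpoch q q (j + s) * qpoch q q (k - s) * qpoch q q (k + s)))
    = (qpoch q q n) ^ 2 * qpoch q q (h - 1) * qpoch x q s * qpoch x q (m + h)
      * qpoch (q ^ (s + 1) / x) q (n - s - h) * x ^ (n - s - h)
      * q powi ((int m ^ 2 + 3 * int m - int s ^ 2 + int s) div 2
                - int m * int n - int m * int h - int h ^ 2 + int h)
      / ((-1) powi (int m - int s - 1) * qpoch q q (m - s) * qpoch q q (m + s)
         * qpoch q q (n - s) * qpoch q q (n + s) * qpoch q q (n - m - h))"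
proof -
  interpret mctx q n h m s
    by unfold_locales (use assms in auto)
  show ?thesis using main_eq[OF assms(6)] .
qed


end
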